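(* Let $U,V\in\mathbb{R}^{n\times r}$ each have orthonormal columns, and let $\Gamma\in\mathbb{R}^r$ be the vector of principal angles between $\operatorname{range}U$ and $\operatorname{range}V$, i.e. $\cos(\Gamma)$ is the vector of singular values of $U^TV$. Then for every $Z\in\mathcal{S}^r_+$, $$\operatorname{dist}(VZV^T;\,U\mathcal{S}^r_+U^T)\le\sqrt2\,\|Z\|_F\,\|\sin(\Gamma)\|_2,$$ where $\sin(\Gamma)$ is taken entrywise.
   Context: $\mathcal{S}^r_+$ is the cone of real symmetric PSD $r\times r$ matrices; $U\mathcal{S}^r_+U^T=\{UWU^T:W\in\mathcal{S}^r_+\}$; $\operatorname{dist}(X;\mathcal{Q})=\inf_{Y\in\mathcal{Q}}\|X-Y\|_F$ with $\|\cdot\|_F$ the Frobenius norm. *)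

theory Defs
  imports "HOL-Analysis.Analysis"
begin

definition psd :: "real^'r^'r \<Rightarrow> bool" where
  "psd Z \<longleftrightarrow> transpose Z = Z \<and> (\<forall>x. 0 \<le> x \<bullet> (Z *v x))"

definition diag_mat :: "real^'r \<Rightarrow> real^'r^'r" where
  "diag_mat s = (\<chi> i j. if i = j then s $ i else 0)"

definition singular_values :: "real^'r^'r \<Rightarrow> real^'r \<Rightarrow> bool" where
  "singular_values M s \<longleftrightarrow> (\<forall>i. 0 \<le> s $ i) \<and>
     (\<exists>P Q. orthogonal_matrix P \<and> orthogonal_matrix Q \<and> M = P ** diag_mat s ** transpose Q)"

definition principal_angles :: "real^'r^'n \<Rightarrow> real^'r^'n \<Rightarrow> real^'r \<Rightarrow> bool" where
  "principal_angles U V g \<longleftrightarrow> (\<forall>i. 0 \<le> g $ i \<and> g $ i \<le> pi / 2) \<and>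
     singular_values (transpose U ** V) (\<chi> i. cos (g $ i))"

end

theory Submission
  imports Defs
begin

lemma inner_mat: "inner (A::real^'m^'n) B = (\<Sum>i\<in>UNIV. \<Sum>j\<in>UNIV. A$i$j * B$i$j)"
  by (simp add: inner_vec_def)

lemma mm_entry: "((A::real^'k^'n) ** B)$i$j = (\<Sum>k\<in>UNIV. A$i$k * B$k$j)"
  by (simp add: matrix_matrix_mult_def)

lemma tr_entry: "transpose (A::real^'k^'n) $i$j = A$j$i"
  by (simp add: transpose_def)

lemma inner_mult_left: "inner ((A::real^'k^'n) ** B) C = inner B (transpose A ** C)"
proof -
  have "inner (A ** B) C = (\<Sum>i\<in>UNIV. \<Sum>j\<in>UNIV. \<Sum>k\<in>UNIV. A$i$k * B$k$j * C$i$j)"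
    unfolding inner_mat mm_entry sum_distrib_right ..
  also have "\<dots> = (\<Sum>i\<in>UNIV. \<Sum>k\<in>UNIV. \<Sum>j\<in>UNIV. A$i$k * B$k$j * C$i$j)"
    by (rule sum.cong[OF refl], rule sum.swap)
  also have "\<dots> = (\<Sum>k\<in>UNIV. \<Sum>i\<in>UNIV. \<Sum>j\<in>UNIV. A$i$k * B$k$j * C$i$j)"
    by (rule sum.swap)
  also have "\<dots> = (\<Sum>k\<in>UNIV. \<Sum>j\<in>UNIV. \<Sum>i\<in>UNIV. A$i$k * B$k$j * C$i$j)"
    by (rule sum.cong[OF refl], rule sum.swap)
  also have "\<dots> = (\<Sum>k\<in>UNIV. \<Sum>j\<in>UNIV. B$k$j * (\<Sum>i\<in>UNIV. A$i$k * C$i$j))"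
    unfolding sum_distrib_left by (intro sum.cong refl) (simp only: mult_ac)
  also have "\<dots> = inner B (transpose A ** C)"
    unfolding inner_mat mm_entry tr_entry ..
  finally show ?thesis .
qed

lemma inner_transpose: "inner (transpose (A::real^'m^'n)) (transpose B) = inner A B"
proof -
  have "inner (transpose A) (transpose B) = (\<Sum>i\<in>UNIV. \<Sum>j\<in>UNIV. A$j$i * B$j$i)"
    unfolding inner_mat tr_entry ..
  also have "\<dots> = inner A B" unfolding inner_mat by (rule sum.swap)
  finally show ?thesis .
qed

lemma inner_mult_right: "inner ((A::real^'k^'n) ** B) C = inner A (C ** transpose B)"
proof -
  have "inner (A ** B) C = inner (transpose B ** transpose A) (transpose C)"
    by (metis inner_transpose matrix_transpose_mul)
  also have "\<dots> = inner (transpose A) (B ** transpose C)"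
    by (metis inner_mult_left transpose_transpose)
  also have "\<dots> = inner (transpose A) (transpose (C ** transpose B))"
    by (metis matrix_transpose_mul transpose_transpose)
  also have "\<dots> = inner A (C ** transpose B)" by (rule inner_transpose)
  finally show ?thesis .
qed

lemma norm_transpose: "norm (transpose (A::real^'m^'n)) = norm A"
  by (simp only: norm_eq_sqrt_inner inner_transpose)

lemma norm_mult_le: "norm ((A::real^'k^'n) ** B) \<le> norm A * norm B"
proof -
  have e: "(A ** B)$i$j = inner (A$i) (column j B)" for i j
    by (simp add: matrix_matrix_mult_def inner_vec_def column_def)
  have "norm (A ** B)^2 = (\<Sum>i\<in>UNIV. \<Sum>j\<in>UNIV. (inner (A$i) (column j B))^2)"
    unfolding power2_norm_eq_inner inner_mat e by (simp add: power2_eq_square)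
  also have "\<dots> \<le> (\<Sum>i\<in>UNIV. \<Sum>j\<in>UNIV. norm (A$i)^2 * norm (column j B)^2)"
  proof (intro sum_mono)
    fix i j
    have "\<bar>inner (A$i) (column j B)\<bar> \<le> norm (A$i) * norm (column j B)" by (rule Cauchy_Schwarz_ineq2)
    hence "\<bar>inner (A$i) (column j B)\<bar>^2 \<le> (norm (A$i) * norm (column j B))^2"
      by (intro power_mono) auto
    thus "(inner (A$i) (column j B))^2 \<le> norm (A$i)^2 * norm (column j B)^2"
      by (simp add: power_mult_distrib)
  qed
  also have "\<dots> = (\<Sum>i\<in>UNIV. norm (A$i)^2) * (\<Sum>j\<in>UNIV. norm (column j B)^2)"
    by (rule sum_product[symmetric])
  also have "(\<Sum>i\<in>UNIV. norm (A$i)^2) = norm A ^2"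
    by (simp add: power2_norm_eq_inner inner_vec_def)
  also have "(\<Sum>j\<in>UNIV. norm (column j B)^2) = norm (transpose B) ^2"
    by (simp add: power2_norm_eq_inner inner_vec_def column_def transpose_def)
  finally have "norm (A ** B)^2 \<le> (norm A * norm B)^2" by (simp add: norm_transpose power_mult_distrib)
  thus ?thesis by (rule power2_le_imp_le) simp
qed

lemma mm_diff_l: "(A::real^'k^'n) ** (B - C) = A ** B - A ** C"
  by (simp add: matrix_matrix_mult_def vec_eq_iff algebra_simps sum_subtractf)
lemma mm_diff_r: "((B::real^'k^'n) - C) ** A = B ** A - C ** A"
  by (simp add: matrix_matrix_mult_def vec_eq_iff algebra_simps sum_subtractf)
lemma mm_zero_l: "(0::real^'k^'n) ** A = 0"
  by (simp add: matrix_matrix_mult_def vec_eq_iff)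
lemma mm_zero_r: "(A::real^'k^'n) ** 0 = 0"
  by (simp add: matrix_matrix_mult_def vec_eq_iff)
lemma transpose_diff: "transpose ((A::real^'k^'n) - B) = transpose A - transpose B"
  by (simp add: transpose_def vec_eq_iff)

lemma inner_vec_transpose: "inner (x::real^'n) (transpose A *v y) = inner (A *v x) y"
  by (metis dot_lmul_matrix inner_commute transpose_matrix_vector)

lemma proj_norm_le:
  fixes P :: "real^'n^'n" and M :: "real^'k^'n"
  assumes "transpose P = P" "P ** P = P"
  shows "norm (P ** M) \<le> norm M"
proof -
  define Q where "Q = mat 1 - P"
  have QP: "transpose Q ** P = 0"
    by (simp add: Q_def transpose_diff mm_diff_r assms)
  have PQ: "transpose P ** Q = 0"
    by (simp add: Q_def mm_diff_l assms)
  have M: "M = P ** M + Q ** M" by (simp add: Q_def mm_diff_r)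
  have "inner (P ** M) (Q ** M) = 0"
    by (simp add: inner_commute[of "P ** M"] inner_mult_left matrix_mul_assoc QP PQ mm_zero_l)
  hence "norm M ^2 = norm (P ** M)^2 + norm (Q ** M)^2"
    by (subst M) (simp add: power2_norm_eq_inner inner_add_left inner_add_right inner_commute)
  hence "norm (P ** M)^2 \<le> norm M ^2" by simp
  thus ?thesis by (rule power2_le_imp_le) simp
qed

lemma orth_norm:
  fixes A Q :: "real^'n^'n"
  assumes "orthogonal_matrix A" "orthogonal_matrix Q"
  shows "inner (A ** D ** transpose Q) (A ** D ** transpose Q) = inner D D"
proof -
  have "inner (A ** D ** transpose Q) (A ** D ** transpose Q)
      = inner (D ** transpose Q) (transpose A ** A ** D ** transpose Q)"
    by (simp add: inner_mult_left matrix_mul_assoc[symmetric])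
  also have "\<dots> = inner (D ** transpose Q) (D ** transpose Q)"
    using assms(1) by (simp add: orthogonal_matrix_def)
  also have "\<dots> = inner D (D ** transpose Q ** Q)"
    by (simp add: inner_mult_right)
  also have "\<dots> = inner D D"
    using assms(2) by (simp add: orthogonal_matrix_def matrix_mul_assoc[symmetric])
  finally show ?thesis .
qed

lemma diag_inner: "inner (diag_mat s) (diag_mat s) = (\<Sum>i\<in>UNIV. (s$i)^2)"
  unfolding inner_mat diag_mat_def by (simp add: if_distrib power2_eq_square cong: if_cong)

lemma mat1_inner: "inner (mat 1 :: real^'r^'r) (mat 1) = real CARD('r)"
  unfolding inner_mat mat_def by (simp add: if_distrib cong: if_cong)

theorem corollaryC4:
  fixes U V :: "real^'r^'n" and g :: "real^'r" and Z :: "real^'r^'r"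
  assumes "transpose U ** U = mat 1"
    and "transpose V ** V = mat 1"
    and "principal_angles U V g"
    and "psd Z"
  shows "infdist (V ** Z ** transpose V) {U ** W ** transpose U | W. psd W}
           \<le> sqrt 2 * norm Z * norm (\<chi> i. sin (g $ i))"
proof -
  note UU = assms(1) and VV = assms(2)
  have ZT: "transpose Z = Z" and Zpos: "\<And>x. 0 \<le> x \<bullet> (Z *v x)" using assms(4) by (auto simp: psd_def)
  define P where "P = U ** transpose U"
  define Q where "Q = mat 1 - P"
  define X where "X = V ** Z ** transpose V"
  define W where "W = transpose U ** X ** U"
  define sv where "sv = (\<chi> i. sin (g $ i))"
  have PT: "transpose P = P" by (simp add: P_def matrix_transpose_mul)
  have PP: "P ** P = P"
  proof -
    have "P ** P = U ** (transpose U ** U) ** transpose U" by (simp only: P_def matrix_mul_assoc)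
    thus ?thesis by (simp add: UU P_def)
  qed
  have QT: "transpose Q = Q" by (simp add: Q_def transpose_diff PT)
  have QQ: "Q ** Q = Q" by (simp add: Q_def mm_diff_l mm_diff_r PP)
  have QP: "Q ** P = 0" by (simp add: Q_def mm_diff_r PP)
  have XT: "transpose X = X" by (simp add: X_def matrix_transpose_mul ZT matrix_mul_assoc)
  have Wpsd: "psd W"
  proof -
    have "transpose W = W" by (simp add: W_def matrix_transpose_mul XT matrix_mul_assoc)
    moreover have "0 \<le> x \<bullet> (W *v x)" for x
    proof -
      have "x \<bullet> (W *v x) = (transpose V *v (U *v x)) \<bullet> (Z *v (transpose V *v (U *v x)))"
        unfolding W_def X_def
        apply (simp only: matrix_vector_mul_assoc[symmetric] inner_vec_transpose transpose_transpose)
        by (metis inner_vec_transpose transpose_transpose)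
      thus ?thesis using Zpos by simp
    qed
    ultimately show ?thesis by (simp add: psd_def)
  qed
  have UWU: "U ** W ** transpose U = P ** X ** P"
    by (simp add: W_def P_def matrix_mul_assoc)
  have dec: "X - P ** X ** P = Q ** X + P ** X ** Q"
    by (simp add: Q_def mm_diff_l mm_diff_r)
  have cross: "inner (Q ** X) (P ** X ** Q) = 0"
    by (simp add: inner_mult_left QT matrix_mul_assoc QP mm_zero_l)
  have n1: "norm (X - P ** X ** P)^2 = norm (Q ** X)^2 + norm (P ** X ** Q)^2"
    unfolding dec by (simp add: power2_norm_eq_inner inner_add_left inner_add_right inner_commute cross)
  have "norm (P ** X ** Q) \<le> norm (X ** Q)"
    using proj_norm_le[OF PT PP, of "X ** Q"] by (simp add: matrix_mul_assoc)
  also have "norm (X ** Q) = norm (Q ** X)"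
    by (metis norm_transpose matrix_transpose_mul XT QT)
  finally have n2: "norm (X - P ** X ** P)^2 \<le> 2 * norm (Q ** X)^2"
    using n1 by (simp add: power_mono)
  have "inner (Q ** X) (Q ** X) = inner (Q ** V ** Z) (Q ** V ** Z)"
    unfolding X_def
    by (simp add: matrix_mul_assoc inner_mult_right[of "Q ** V ** Z" "transpose V"] VV)
       (simp add: matrix_mul_assoc[symmetric] VV)
  hence n3: "norm (Q ** X) = norm (Q ** V ** Z)" by (metis norm_eq_sqrt_inner)
  have n4: "norm (Q ** V ** Z) \<le> norm (Q ** V) * norm Z" by (rule norm_mult_le)
  obtain A B where AB: "orthogonal_matrix A" "orthogonal_matrix B"
    "transpose U ** V = A ** diag_mat (\<chi> i. cos (g $ i)) ** transpose B"
    using assms(3) unfolding principal_angles_def singular_values_def by blast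
  have cs: "inner (transpose U ** V) (transpose U ** V) = (\<Sum>i\<in>UNIV. (cos (g$i))^2)"
  proof -
    have "inner (transpose U ** V) (transpose U ** V) = inner (diag_mat (\<chi> i. cos (g $ i))) (diag_mat (\<chi> i. cos (g $ i)))"
      using AB(3) orth_norm[OF AB(1,2)] by simp
    also have "\<dots> = (\<Sum>i\<in>UNIV. (cos (g$i))^2)" by (simp add: diag_inner)
    finally show ?thesis .
  qed
  have "inner (Q ** V) (Q ** V) = inner V (Q ** V)"
    by (simp add: inner_mult_left QT matrix_mul_assoc QQ)
  also have "\<dots> = inner V V - inner V (U ** (transpose U ** V))"
    by (simp add: Q_def mm_diff_r P_def matrix_mul_assoc inner_diff_right)
  also have "inner V (U ** (transpose U ** V)) = inner (transpose U ** V) (transpose U ** V)"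
    using inner_mult_left[of U "transpose U ** V" V] by (simp add: inner_commute)
  also have "inner V V = real CARD('r)"
  proof -
    have "inner V V = inner (V ** mat 1) V" by simp
    also have "\<dots> = inner (mat 1 :: real^'r^'r) (mat 1)" by (simp only: inner_mult_left VV)
    finally show ?thesis by (simp add: mat1_inner)
  qed
  finally have "inner (Q ** V) (Q ** V) = real CARD('r) - (\<Sum>i\<in>UNIV. (cos (g$i))^2)"
    using cs by simp
  also have "\<dots> = (\<Sum>i\<in>UNIV. (sin (g$i))^2)"
    by (simp add: sin_squared_eq sum_subtractf)
  also have "\<dots> = norm sv ^2"
    unfolding power2_norm_eq_inner sv_def inner_vec_def by (simp add: power2_eq_square)
  finally have "norm (Q ** V)^2 = norm sv ^2" by (simp only: power2_norm_eq_inner)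
  hence n5: "norm (Q ** V) = norm sv" by (rule power2_eq_imp_eq) auto
  have "norm (X - P ** X ** P)^2 \<le> 2 * (norm Z * norm sv)^2"
  proof -
    have "norm (Q ** X) \<le> norm Z * norm sv" using n3 n4 n5 by (simp add: mult.commute)
    hence "norm (Q ** X)^2 \<le> (norm Z * norm sv)^2" by (intro power_mono) auto
    thus ?thesis using n2 by linarith
  qed
  also have "\<dots> = (sqrt 2 * norm Z * norm sv)^2" by (simp add: power_mult_distrib)
  finally have "norm (X - P ** X ** P) \<le> sqrt 2 * norm Z * norm sv"
    by (rule power2_le_imp_le) simp
  moreover have "infdist X {U ** W ** transpose U | W. psd W} \<le> dist X (P ** X ** P)"
  proof (rule infdist_le)
    have "P ** X ** P = U ** W ** transpose U \<and> psd W" using Wpsd UWU by simp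
    thus "P ** X ** P \<in> {U ** W ** transpose U | W. psd W}" by blast
  qed
  ultimately have "infdist X {U ** W ** transpose U | W. psd W} \<le> sqrt 2 * norm Z * norm sv"
    unfolding dist_norm by linarith
  thus ?thesis unfolding X_def sv_def .
qed

end
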